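(* Let $r\ge1$ and let $\mu=\langle\mu_1,\dots,\mu_{r+1}\rangle\in\mathbb{Z}^{r+1}$ with $\mu_1+\cdots+\mu_{r+1}=0$. Then the map of the previous theorem (juggling sequence $\mapsto$ multiset of roots $\varepsilon_i-\varepsilon_{i+j}$, one for each throw at time $i$ to height $j$) is a bijection between $\mathrm{JS}(\langle\mu_1,\dots,\mu_r\rangle,\langle\mu_1+\cdots+\mu_r\rangle,r)$ and $P_{A_r}(\mu)$; in particular \[K_{A_r}(\mu)=\mathsf{js}(\langle\mu_1,\dots,\mu_r\rangle,\langle\mu_1+\cdots+\mu_r\rangle,r).\]
   Context: A (magic) juggling state is a finitely supported integer vector $\mathbf{s}=\langle s_1,s_2,\dots\rangle$ indexed by heights $1,2,\dots$ (trailing zeros omitted). A juggling sequence of length $n$ from $\mathbf{a}$ to $\mathbf{b}$ is a sequence $(\mathbf{s}_0,\dots,\mathbf{s}_n)$ with $\mathbf{s}_0=\mathbf{a}$, $\mathbf{s}_n=\mathbf{b}$, such that for each $1\le i\le n$ there are nonnegative integers $c^{(i)}_1,c^{(i)}_2,\dots$ (finitely many nonzero) with $\sum_k c^{(i)}_k=(\mathbf{s}_{i-1})_1$ and $(\mathbf{s}_i)_k=(\mathbf{s}_{i-1})_{k+1}+c^{(i)}_k$ for all $k\ge1$; $c^{(i)}_j$ is the number of throws at time $i$ to height $j$. $\mathrm{JS}(\mathbf{a},\mathbf{b},n)$ is the set of these, $\mathsf{js}(\mathbf{a},\mathbf{b},n)$ its cardinality. $\varepsilon_1,\dots,\varepsilon_{r+1}$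 is the standard basis of $\mathbb{R}^{r+1}$, $\Phi^+_{A_r}=\{\varepsilon_i-\varepsilon_j:1\le i<j\le r+1\}$, $P_{A_r}(\mu)$ is the set of finite multisets of elements of $\Phi^+_{A_r}$ summing to $\mu$ (empty multiset allowed for $\mu=0$), and $K_{A_r}(\mu)=|P_{A_r}(\mu)|$. *)

theory Defs
  imports Main "HOL-Library.Multiset" "HOL-Library.Function_Algebras"
begin

text \<open>Juggling states: finitely supported integer vectors indexed by heights 1,2,...;
  encoded as functions nat => int with value 0 at the unused index 0.\<close>
definition jstate :: "(nat \<Rightarrow> int) \<Rightarrow> bool" where
  "jstate s \<longleftrightarrow> s 0 = 0 \<and> finite {k. s k \<noteq> 0}"

definition jstep :: "(nat \<Rightarrow> int) \<Rightarrow> (nat \<Rightarrow> int) \<Rightarrow> bool" where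
  "jstep s t \<longleftrightarrow> (\<exists>c::nat \<Rightarrow> nat. c 0 = 0 \<and> finite {k. c k \<noteq> 0} \<and>
      int (sum c {k. c k \<noteq> 0}) = s 1 \<and> (\<forall>k\<ge>1. t k = s (k + 1) + int (c k)))"

definition JS :: "(nat \<Rightarrow> int) \<Rightarrow> (nat \<Rightarrow> int) \<Rightarrow> nat \<Rightarrow> (nat \<Rightarrow> int) list set" where
  "JS a b n = {ss. length ss = n + 1 \<and> ss ! 0 = a \<and> ss ! n = b \<and>
      (\<forall>s\<in>set ss. jstate s) \<and> (\<forall>i<n. jstep (ss ! i) (ss ! (i + 1)))}"

definition js :: "(nat \<Rightarrow> int) \<Rightarrow> (nat \<Rightarrow> int) \<Rightarrow> nat \<Rightarrow> nat" where
  "js a b n = card (JS a b n)"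

text \<open>Vectors of Z^(r+1) (inside R^(r+1)) as functions nat => int supported on {1..r+1};
  root i j is epsilon_i - epsilon_j.\<close>
definition root :: "nat \<Rightarrow> nat \<Rightarrow> nat \<Rightarrow> int" where
  "root i j = (\<lambda>k. (if k = i then 1 else 0) - (if k = j then 1 else 0))"

definition pos_roots_A :: "nat \<Rightarrow> (nat \<Rightarrow> int) set" where
  "pos_roots_A r = {root i j | i j. 1 \<le> i \<and> i < j \<and> j \<le> r + 1}"

definition P_A :: "nat \<Rightarrow> (nat \<Rightarrow> int) \<Rightarrow> (nat \<Rightarrow> int) multiset set" where
  "P_A r \<mu> = {M. set_mset M \<subseteq> pos_roots_A r \<and> sum_mset M = \<mu>}"

definition K_A :: "nat \<Rightarrow> (nat \<Rightarrow> int) \<Rightarrow> nat" where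
  "K_A r \<mu> = card (P_A r \<mu>)"

text \<open>Number of throws at time i (1 <= i <= n) to height j in the sequence ss.\<close>
definition throws :: "(nat \<Rightarrow> int) list \<Rightarrow> nat \<Rightarrow> nat \<Rightarrow> nat" where
  "throws ss i j = nat ((ss ! i) j - (ss ! (i - 1)) (j + 1))"

definition js_to_roots :: "nat \<Rightarrow> (nat \<Rightarrow> int) list \<Rightarrow> (nat \<Rightarrow> int) multiset" where
  "js_to_roots n ss = (\<Sum>i\<in>{1..n}. \<Sum>j\<in>{j. 1 \<le> j \<and> throws ss i j \<noteq> 0}.
       replicate_mset (throws ss i j) (root i (i + j)))"

definition prefix_state :: "nat \<Rightarrow> (nat \<Rightarrow> int) \<Rightarrow> nat \<Rightarrow> int" where
  "prefix_state r \<mu> = (\<lambda>k. if 1 \<le> k \<and> k \<le> r then \<mu> k else 0)"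

definition single_state :: "int \<Rightarrow> nat \<Rightarrow> int" where
  "single_state m = (\<lambda>k. if k = 1 then m else 0)"

end

theory Submission imports Defs begin

lemma sum_fun_apply: "(sum f A) k = sum (\<lambda>a. f a k) A"
  by (induct A rule: infinite_finite_induct) simp_all

lemma sum_mset_sum: "sum_mset (sum f A) = sum (\<lambda>a. sum_mset (f a)) A"
  by (induct A rule: infinite_finite_induct) simp_all

lemma root_inj:
  assumes "i \<noteq> j" "i' \<noteq> j'" "root i j = root i' j'"
  shows "i = i' \<and> j = j'"
proof -
  have a: "root i j i = root i' j' i" and b: "root i j j = root i' j' j" using assms(3) by auto
  from a assms(1,2) have "i = i'" unfolding root_def by (auto split: if_splits)
  moreover from b assms(1,2) have "j = j'" unfolding root_def by (auto split: if_splits)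
  ultimately show ?thesis by simp
qed

definition outc :: "nat \<Rightarrow> (nat\<Rightarrow>nat\<Rightarrow>nat) \<Rightarrow> nat \<Rightarrow> nat" where
  "outc r c k = (\<Sum>t\<in>{1..r}. \<Sum>j\<in>{1..r}. if t = k then c t j else 0)"
definition innc :: "nat \<Rightarrow> (nat\<Rightarrow>nat\<Rightarrow>nat) \<Rightarrow> nat \<Rightarrow> nat" where
  "innc r c k = (\<Sum>t\<in>{1..r}. \<Sum>j\<in>{1..r}. if t + j = k then c t j else 0)"
definition gmap :: "nat \<Rightarrow> (nat\<Rightarrow>nat\<Rightarrow>nat) \<Rightarrow> (nat \<Rightarrow> int) multiset" where
  "gmap r c = (\<Sum>i\<in>{1..r}. \<Sum>j\<in>{1..r}. replicate_mset (c i j) (root i (i+j)))"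

lemma outc_eq: assumes "1 \<le> k" "k \<le> r" shows "outc r c k = (\<Sum>j\<in>{1..r}. c k j)"
proof -
  have "outc r c k = (\<Sum>t\<in>{1..r}. if t = k then (\<Sum>j\<in>{1..r}. c t j) else 0)"
    unfolding outc_def by (intro sum.cong refl) auto
  then show ?thesis using assms by (simp add: sum.delta)
qed

lemma outc_0: "k = 0 \<or> k > r \<Longrightarrow> outc r c k = 0"
  unfolding outc_def by auto

lemma innc_eq: assumes "k \<le> r + 1" shows "innc r c k = (\<Sum>t\<in>{1..<k}. c t (k - t))"
proof -
  have "innc r c k = (\<Sum>t\<in>{1..r}. if t < k then c t (k - t) else 0)"
    unfolding innc_def
  proof (rule sum.cong[OF refl])
    fix t assume t: "t \<in> {1..r}"
    have "(\<Sum>j\<in>{1..r}. if t + j = k then c t j else 0) = (\<Sum>j\<in>{1..r}. if k - t = j then (if t < k then c t j else 0) else 0)"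
      by (rule sum.cong) auto
    also have "\<dots> = (if t < k then c t (k - t) else 0)"
      using t assms by (cases "t < k") (auto simp: sum.delta)
    finally show "(\<Sum>j\<in>{1..r}. if t + j = k then c t j else 0) = (if t < k then c t (k - t) else 0)" .
  qed
  also have "\<dots> = (\<Sum>t\<in>{1..r} \<inter> {t. t < k}. c t (k - t))"
    by (simp add: sum.inter_restrict)
  also have "{1..r} \<inter> {t. t < k} = {1..<k}" using assms by auto
  finally show ?thesis .
qed

lemma count_gmap: "count (gmap r c) x = (\<Sum>i\<in>{1..r}. \<Sum>j\<in>{1..r}. if root i (i+j) = x then c i j else 0)"
  unfolding gmap_def by (simp add: count_sum eq_commute[of x])

lemma sum_gmap: "sum_mset (gmap r c) k = int (outc r c k) - int (innc r c k)"
proof -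
  have "sum_mset (gmap r c) k = (\<Sum>i\<in>{1..r}. \<Sum>j\<in>{1..r}. int (c i j) * root i (i+j) k)"
    unfolding gmap_def by (simp add: sum_mset_sum sum_fun_apply)
  also have "\<dots> = (\<Sum>i\<in>{1..r}. \<Sum>j\<in>{1..r}. (if i = k then int (c i j) else 0) - (if i + j = k then int (c i j) else 0))"
    unfolding root_def by (intro sum.cong refl) (auto simp: algebra_simps)
  also have "\<dots> = int (outc r c k) - int (innc r c k)"
    unfolding outc_def innc_def by (simp add: sum_subtractf of_nat_sum; intro arg_cong2[where f="(-)"] sum.cong; simp)
  finally show ?thesis .
qed

definition Dset :: "nat \<Rightarrow> (nat \<Rightarrow> int) \<Rightarrow> (nat\<Rightarrow>nat\<Rightarrow>nat) set" where
  "Dset r \<mu> = {c. (\<forall>i j. c i j \<noteq> 0 \<longrightarrow> 1 \<le> i \<and> 1 \<le> j \<and> i + j \<le> r+1) \<and>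
     (\<forall>k. int (outc r c k) - int (innc r c k) = \<mu> k)}"

definition supp_ok :: "nat \<Rightarrow> (nat\<Rightarrow>nat\<Rightarrow>nat) \<Rightarrow> bool" where
  "supp_ok r c \<longleftrightarrow> (\<forall>i j. c i j \<noteq> 0 \<longrightarrow> 1 \<le> i \<and> 1 \<le> j \<and> i + j \<le> r+1)"

lemma count_gmap_root:
  assumes "supp_ok r c" "1 \<le> p" "p < q"
  shows "count (gmap r c) (root p q) = c p (q - p)"
proof -
  have "count (gmap r c) (root p q) = (\<Sum>i\<in>{1..r}. if i = p then (\<Sum>j\<in>{1..r}. if j = q - p then c i j else 0) else 0)"
    unfolding count_gmap
  proof (intro sum.cong refl)
    fix i assume i: "i \<in> {1..r}"
    show "(\<Sum>j\<in>{1..r}. if root i (i + j) = root p q then c i j else 0) = (if i = p then (\<Sum>j\<in>{1..r}. if j = q - p then c i j else 0) else 0)"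
    proof (cases "i = p")
      case True
      have "(\<Sum>j\<in>{1..r}. if root p (p + j) = root p q then c p j else 0) = (\<Sum>j\<in>{1..r}. if j = q - p then c p j else 0)"
      proof (intro sum.cong refl)
        fix j assume "j \<in> {1..r}"
        then show "(if root p (p + j) = root p q then c p j else 0) = (if j = q - p then c p j else 0)"
          using root_inj[of p "p+j" p q] assms by auto
      qed
      then show ?thesis by (subst if_P[OF True]) (simp only: True)
    next
      case False
      have "(\<Sum>j\<in>{1..r}. if root i (i + j) = root p q then c i j else 0) = (\<Sum>j\<in>{1..r}. 0)"
      proof (intro sum.cong refl)
        fix j assume "j \<in> {1..r}"
        then show "(if root i (i + j) = root p q then c i j else 0) = 0"
          using root_inj[of i "i+j" p q] assms False by auto
      qed
      then show ?thesis using False by simp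
    qed
  qed
  also have "\<dots> = (if p \<in> {1..r} then (if q - p \<in> {1..r} then c p (q - p) else 0) else 0)"
    by (simp only: sum.delta finite_atLeastAtMost)
  also have "\<dots> = c p (q - p)"
  proof -
    have h: "c p (q-p) \<noteq> 0 \<longrightarrow> 1 \<le> p \<and> 1 \<le> q-p \<and> p + (q-p) \<le> r+1" using assms(1) unfolding supp_ok_def by blast
    show ?thesis using h assms(2,3) by auto
  qed
  finally show ?thesis .
qed

lemma set_gmap:
  assumes "supp_ok r c" shows "set_mset (gmap r c) \<subseteq> pos_roots_A r"
proof
  fix x assume "x \<in># gmap r c"
  then have "count (gmap r c) x \<noteq> 0" by (simp only: not_in_iff[symmetric] not_not)
  then have "(\<Sum>i\<in>{1..r}. \<Sum>j\<in>{1..r}. if root i (i+j) = x then c i j else 0) \<noteq> 0"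
    by (metis count_gmap)
  then obtain i where i: "i \<in> {1..r}" and si: "(\<Sum>j\<in>{1..r}. if root i (i+j) = x then c i j else 0) \<noteq> 0"
    by (rule sum.not_neutral_contains_not_neutral)
  from si obtain j where j: "j \<in> {1..r}" and ne: "(if root i (i+j) = x then c i j else 0) \<noteq> 0"
    by (rule sum.not_neutral_contains_not_neutral)
  have "root i (i+j) = x" "c i j \<noteq> 0" using ne by (metis (full_types))+
  moreover have "1 \<le> i \<and> 1 \<le> j \<and> i + j \<le> r+1" using assms \<open>c i j \<noteq> 0\<close> unfolding supp_ok_def by blast
  ultimately show "x \<in> pos_roots_A r" unfolding pos_roots_A_def
    by (intro CollectI exI[of _ i] exI[of _ "i+j"]) auto
qed

lemma bij_G: "bij_betw (gmap r) (Dset r \<mu>) (P_A r \<mu>)"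
proof (rule bij_betwI')
  fix c d assume c: "c \<in> Dset r \<mu>" and d: "d \<in> Dset r \<mu>"
  have sc: "supp_ok r c" and sd: "supp_ok r d" using c d unfolding Dset_def supp_ok_def by auto
  show "(gmap r c = gmap r d) = (c = d)"
  proof
    assume eq: "gmap r c = gmap r d"
    show "c = d"
    proof (intro ext)
      fix i j
      show "c i j = d i j"
      proof (cases "1 \<le> i \<and> 1 \<le> j")
        case True
        then have "c i j = count (gmap r c) (root i (i+j))" "d i j = count (gmap r d) (root i (i+j))"
          using count_gmap_root[OF sc, of i "i+j"] count_gmap_root[OF sd, of i "i+j"] by auto
        then show ?thesis using eq by simp
      next
        case False
        have "c i j = 0" "d i j = 0" using sc sd False unfolding supp_ok_def by blast+
        then show ?thesis by simp
      qed
    qed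
  qed simp
next
  fix c assume c: "c \<in> Dset r \<mu>"
  have sc: "supp_ok r c" using c unfolding Dset_def supp_ok_def by auto
  have "sum_mset (gmap r c) = \<mu>"
    using c unfolding Dset_def by (auto simp: sum_gmap)
  then show "gmap r c \<in> P_A r \<mu>" using set_gmap[OF sc] unfolding P_A_def by auto
next
  fix M assume M: "M \<in> P_A r \<mu>"
  define c where "c = (\<lambda>i j. if 1 \<le> i \<and> 1 \<le> j \<and> i + j \<le> r + 1 then count M (root i (i+j)) else 0)"
  have sc: "supp_ok r c" unfolding supp_ok_def c_def by auto
  have gM: "gmap r c = M"
  proof (rule multiset_eqI)
    fix x
    show "count (gmap r c) x = count M x"
    proof (cases "x \<in> pos_roots_A r")
      case True
      then obtain p q where pq: "x = root p q" "1 \<le> p" "p < q" "q \<le> r + 1" unfolding pos_roots_A_def by auto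
      then show ?thesis using count_gmap_root[OF sc pq(2,3)] unfolding c_def by auto
    next
      case False
      then have "x \<notin># M" using M unfolding P_A_def by blast
      moreover have "x \<notin># gmap r c" using False set_gmap[OF sc] by blast
      ultimately show ?thesis by (simp add: not_in_iff)
    qed
  qed
  have "sum_mset (gmap r c) = \<mu>" using gM M unfolding P_A_def by simp
  then have "\<forall>k. int (outc r c k) - int (innc r c k) = \<mu> k" by (auto simp: sum_gmap[symmetric])
  then have "c \<in> Dset r \<mu>" using sc unfolding Dset_def supp_ok_def by auto
  then show "\<exists>c\<in>Dset r \<mu>. M = gmap r c" using gM by auto
qed


definition stf :: "(nat\<Rightarrow>int) \<Rightarrow> (nat\<Rightarrow>nat\<Rightarrow>nat) \<Rightarrow> nat \<Rightarrow> nat \<Rightarrow> int" where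
  "stf a c i k = (if k = 0 then 0 else a (i+k) + (\<Sum>t\<in>{1..i}. int (c t (i+k-t))))"

lemma stf_Suc: assumes "k \<ge> 1" shows "stf a c (Suc i) k = stf a c i (k+1) + int (c (Suc i) k)"
proof -
  have "(\<Sum>t\<in>{1..Suc i}. int (c t (Suc i + k - t))) = (\<Sum>t\<in>{1..i}. int (c t (i + (k+1) - t))) + int (c (Suc i) k)"
    by (simp add: sum.cl_ivl_Suc)
  then show ?thesis using assms unfolding stf_def by simp
qed

lemma stf_0: "a 0 = 0 \<Longrightarrow> stf a c 0 = a"
  unfolding stf_def by (auto simp: fun_eq_iff)

lemma JS_state:
  assumes "ss \<in> JS a b n" "i \<le> n"
  shows "ss ! i = stf a (throws ss) i"
  using assms(2)
proof (induction i)
  case 0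
  have "ss ! 0 = a" "jstate (ss ! 0)" using assms(1) unfolding JS_def by auto
  then show ?case using stf_0[of a] unfolding jstate_def by auto
next
  case (Suc i)
  have len: "length ss = n + 1" using assms(1) unfolding JS_def by auto
  have "jstep (ss ! i) (ss ! Suc i)" using assms(1) Suc.prems unfolding JS_def by auto
  then obtain c where c: "\<forall>k\<ge>1. (ss ! Suc i) k = (ss ! i) (k + 1) + int (c k)" unfolding jstep_def by auto
  have js: "jstate (ss ! Suc i)" using assms(1) Suc.prems len unfolding JS_def by (auto simp: nth_mem)
  have IH: "ss ! i = stf a (throws ss) i" using Suc by auto
  show ?case
  proof (rule ext)
    fix k
    show "(ss ! Suc i) k = stf a (throws ss) (Suc i) k"
    proof (cases "k = 0")
      case True then show ?thesis using js unfolding jstate_def stf_def by auto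
    next
      case False
      then have k: "k \<ge> 1" by simp
      have "throws ss (Suc i) k = c k" unfolding throws_def using c k by simp
      then show ?thesis using c k stf_Suc[OF k, of a "throws ss" i] IH by simp
    qed
  qed
qed

lemma JS_step:
  assumes "ss \<in> JS a b n" "i < n"
  shows "(ss ! i) 1 = int (sum (throws ss (Suc i)) {j. 1 \<le> j \<and> throws ss (Suc i) j \<noteq> 0})"
proof -
  have "jstep (ss ! i) (ss ! Suc i)" using assms unfolding JS_def by auto
  then obtain c where c0: "c 0 = 0" and cs: "int (sum c {k. c k \<noteq> 0}) = (ss ! i) 1"
     and c: "\<forall>k\<ge>1. (ss ! Suc i) k = (ss ! i) (k + 1) + int (c k)" unfolding jstep_def by auto
  have t: "throws ss (Suc i) k = c k" if "k \<ge> 1" for k unfolding throws_def using c that by simp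
  have "{k. c k \<noteq> 0} = {j. 1 \<le> j \<and> throws ss (Suc i) j \<noteq> 0}"
    using t c0 by (auto; metis One_nat_def Suc_leI neq0_conv)
  moreover have "sum c {k. c k \<noteq> 0} = sum (throws ss (Suc i)) {k. c k \<noteq> 0}"
    using t c0 by (intro sum.cong refl) (metis One_nat_def Suc_leI mem_Collect_eq neq0_conv)
  ultimately show ?thesis using cs by simp
qed


definition fmap :: "nat \<Rightarrow> (nat \<Rightarrow> int) list \<Rightarrow> nat \<Rightarrow> nat \<Rightarrow> nat" where
  "fmap r ss = (\<lambda>i j. if 1 \<le> i \<and> i \<le> r \<and> 1 \<le> j then throws ss i j else 0)"

lemma stf_fmap: assumes "i \<le> r" shows "stf a (throws ss) i = stf a (fmap r ss) i"
proof (rule ext)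
  fix k
  have "(\<Sum>t\<in>{1..i}. int (throws ss t (i+k-t))) = (\<Sum>t\<in>{1..i}. int (fmap r ss t (i+k-t)))" if "k \<noteq> 0"
  proof (rule sum.cong[OF refl])
    fix t assume "t \<in> {1..i}"
    then have "1 \<le> t \<and> t \<le> r \<and> 1 \<le> i + k - t" using assms that by auto
    then show "int (throws ss t (i+k-t)) = int (fmap r ss t (i+k-t))" unfolding fmap_def by simp
  qed
  then show "stf a (throws ss) i k = stf a (fmap r ss) i k" unfolding stf_def by simp
qed

context
  fixes r :: nat and \<mu> :: "nat \<Rightarrow> int"
  assumes r1: "r \<ge> 1"
    and mu0: "\<forall>k. (k = 0 \<or> k > r + 1) \<longrightarrow> \<mu> k = 0"
    and mus: "(\<Sum>k=1..r+1. \<mu> k) = 0"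
begin

abbreviation "aa \<equiv> prefix_state r \<mu>"
abbreviation "mm \<equiv> (\<Sum>k=1..r. \<mu> k)"
abbreviation "bb \<equiv> single_state mm"

lemma mu_last: "\<mu> (r+1) = - mm"
  using mus by (simp add: sum.cl_ivl_Suc)

lemma vanish:
  assumes ss: "ss \<in> JS aa bb r" and t: "1 \<le> t" "t \<le> r" and j: "t + j \<ge> r + 2"
  shows "throws ss t j = 0"
proof -
  define k where "k = t + j - r"
  have k2: "k \<ge> 2" using j unfolding k_def by simp
  have e1: "ss ! r = bb" using ss unfolding JS_def by auto
  have e2: "ss ! r = stf aa (throws ss) r" by (rule JS_state[OF ss]) simp
  have "bb k = 0" using k2 unfolding single_state_def by simp
  then have "stf aa (throws ss) r k = 0" using e1 e2 by metis
  moreover have "aa (r + k) = 0" using k2 unfolding prefix_state_def by simp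
  moreover have "k \<noteq> 0" using k2 by simp
  ultimately have "0 = (\<Sum>t'\<in>{1..r}. int (throws ss t' (r + k - t')))"
    unfolding stf_def by (simp only: if_False add_0)
  then have "(\<Sum>t'\<in>{1..r}. int (throws ss t' (r + k - t'))) = 0" by simp
  then have "\<forall>t'\<in>{1..r}. int (throws ss t' (r + k - t')) = 0"
    by (subst (asm) sum_nonneg_eq_0_iff) auto
  then have "int (throws ss t (r + k - t)) = 0" using t by auto
  moreover have "r + k - t = j" using j unfolding k_def by simp
  ultimately show ?thesis by simp
qed

lemma fmap_supp: assumes "ss \<in> JS aa bb r" shows "supp_ok r (fmap r ss)"
  unfolding supp_ok_def
proof (intro allI impI)
  fix i j assume "fmap r ss i j \<noteq> 0"
  then have h: "1 \<le> i" "i \<le> r" "1 \<le> j" "throws ss i j \<noteq> 0" unfolding fmap_def by (meson)+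
  have "\<not> (i + j \<ge> r + 2)" using vanish[OF assms h(1,2), of j] h(4) by blast
  then have "i + j \<le> r + 1" by simp
  then show "1 \<le> i \<and> 1 \<le> j \<and> i + j \<le> r + 1" using h by simp
qed


lemma fmap_throws: "1 \<le> i \<Longrightarrow> i \<le> r \<Longrightarrow> 1 \<le> j \<Longrightarrow> fmap r ss i j = throws ss i j"
  unfolding fmap_def by simp

lemma JS_state': assumes "ss \<in> JS aa bb r" "i \<le> r" shows "ss ! i = stf aa (fmap r ss) i"
  using JS_state[OF assms] stf_fmap[OF assms(2)] by simp

lemma innc_zero_big: assumes "supp_ok r c" "k > r + 1" shows "innc r c k = 0"
  unfolding innc_def
proof (intro sum.neutral ballI)
  fix t j assume "t \<in> {1..r}" "j \<in> {1..r}"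
  have "c t j \<noteq> 0 \<longrightarrow> t + j \<le> r + 1" using assms(1) unfolding supp_ok_def by blast
  then show "(if t + j = k then c t j else 0) = 0" using assms(2) by auto
qed

lemma fmap_D: assumes ss: "ss \<in> JS aa bb r" shows "fmap r ss \<in> Dset r \<mu>"
proof -
  define c where "c = fmap r ss"
  have sc: "supp_ok r c" using fmap_supp[OF ss] unfolding c_def .
  have st: "ss ! i = stf aa c i" if "i \<le> r" for i using JS_state'[OF ss that] unfolding c_def .
  have "int (outc r c k) - int (innc r c k) = \<mu> k" for k
  proof -
    consider "k = 0" | "1 \<le> k \<and> k \<le> r" | "k = r + 1" | "k > r + 1" by linarith
    then show ?thesis
    proof cases
      case 1
      then show ?thesis using mu0 outc_0[of k r c] innc_eq[of 0 r c] by simp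
    next
      case 2
      define i where "i = k - 1"
      have ik: "k = Suc i" "i < r" using 2 unfolding i_def by auto
      have o: "outc r c k = (\<Sum>j\<in>{1..r}. c k j)" using 2 by (simp add: outc_eq)
      have sup: "{j. 1 \<le> j \<and> throws ss (Suc i) j \<noteq> 0} \<subseteq> {1..r}"
      proof
        fix j assume "j \<in> {j. 1 \<le> j \<and> throws ss (Suc i) j \<noteq> 0}"
        then have "1 \<le> j" "throws ss (Suc i) j \<noteq> 0" by auto
        then have "c (Suc i) j \<noteq> 0" unfolding c_def using ik fmap_throws[of "Suc i" j ss] by simp
        then have "Suc i + j \<le> r + 1" using sc unfolding supp_ok_def by blast
        then show "j \<in> {1..r}" using \<open>1 \<le> j\<close> by simp
      qed
      have "sum (throws ss (Suc i)) {j. 1 \<le> j \<and> throws ss (Suc i) j \<noteq> 0} = sum (throws ss (Suc i)) {1..r}"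
        by (rule sum.mono_neutral_left) (use sup in auto)
      also have "\<dots> = (\<Sum>j\<in>{1..r}. c k j)"
        unfolding c_def using ik by (intro sum.cong refl) (simp add: fmap_throws)
      finally have s1: "(ss ! i) 1 = int (outc r c k)"
        using JS_step[OF ss, of i] ik o by simp
      have "(ss ! i) 1 = aa (i + 1) + (\<Sum>t\<in>{1..i}. int (c t (i + 1 - t)))"
        using st[of i] ik unfolding stf_def by simp
      also have "aa (i + 1) = \<mu> k" unfolding prefix_state_def using ik by simp
      also have "(\<Sum>t\<in>{1..i}. int (c t (i + 1 - t))) = int (innc r c k)"
      proof -
        have "innc r c k = (\<Sum>t\<in>{1..<k}. c t (k - t))" using ik by (simp add: innc_eq)
        also have "{1..<k} = {1..i}" using ik by auto
        finally show ?thesis using ik by (simp add: of_nat_sum)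
      qed
      finally show ?thesis using s1 by simp
    next
      case 3
      have o: "outc r c k = 0" using 3 by (simp add: outc_0)
      have "ss ! r = bb" using ss unfolding JS_def by auto
      then have "mm = stf aa c r 1" using st[of r] unfolding single_state_def by (metis order_refl)
      also have "\<dots> = (\<Sum>t\<in>{1..r}. int (c t (r + 1 - t)))"
        unfolding stf_def prefix_state_def by simp
      also have "\<dots> = int (innc r c k)"
      proof -
        have "innc r c k = (\<Sum>t\<in>{1..<k}. c t (k - t))" using 3 by (simp add: innc_eq)
        also have "{1..<k} = {1..r}" using 3 by auto
        finally show ?thesis using 3 by (simp add: of_nat_sum)
      qed
      finally show ?thesis using o mu_last 3 by simp
    next
      case 4
      then show ?thesis using mu0 outc_0[of k r c] innc_zero_big[OF sc 4] by simp
    qed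
  qed
  then show ?thesis using sc unfolding Dset_def supp_ok_def c_def by blast
qed


definition ssc :: "(nat \<Rightarrow> nat \<Rightarrow> nat) \<Rightarrow> (nat \<Rightarrow> int) list" where
  "ssc c = map (\<lambda>i. stf aa c i) [0..<r+1]"

lemma ssc_nth: "i \<le> r \<Longrightarrow> ssc c ! i = stf aa c i"
  unfolding ssc_def by (simp del: upt_Suc add: nth_upt)

lemma ssc_len: "length (ssc c) = r + 1"
  unfolding ssc_def by simp

lemma aa0: "aa 0 = 0" unfolding prefix_state_def by simp

lemma ssc_JS: assumes c: "c \<in> Dset r \<mu>" shows "ssc c \<in> JS aa bb r"
proof -
  have sc: "supp_ok r c" using c unfolding Dset_def supp_ok_def by blast
  have bal: "int (outc r c k) - int (innc r c k) = \<mu> k" for k using c unfolding Dset_def by blast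
  have sz: "c t j = 0" if "t + j > r + 1" for t j using sc that unfolding supp_ok_def by force
  have first: "ssc c ! 0 = aa" using ssc_nth[of 0 c] stf_0[of aa c] aa0 by simp
  have last: "ssc c ! r = bb"
  proof (rule ext)
    fix k
    show "(ssc c ! r) k = bb k"
    proof -
      consider "k = 0" | "k = 1" | "k \<ge> 2" by linarith
      then show ?thesis
      proof cases
        case 1 then show ?thesis using ssc_nth[of r c] unfolding stf_def single_state_def by simp
      next
        case 2
        have "(ssc c ! r) k = (\<Sum>t\<in>{1..r}. int (c t (r + 1 - t)))"
          using ssc_nth[of r c] 2 unfolding stf_def prefix_state_def by simp
        also have "\<dots> = int (innc r c (r+1))"
        proof -
          have "innc r c (r+1) = (\<Sum>t\<in>{1..<r+1}. c t (r + 1 - t))" by (simp add: innc_eq)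
          also have "{1..<r+1} = {1..r}" by auto
          finally show ?thesis by (simp add: of_nat_sum)
        qed
        also have "\<dots> = mm" using bal[of "r+1"] outc_0[of "r+1" r c] mu_last by simp
        finally show ?thesis using 2 unfolding single_state_def by simp
      next
        case 3
        have "(ssc c ! r) k = (\<Sum>t\<in>{1..r}. int (c t (r + k - t)))"
          using ssc_nth[of r c] 3 unfolding stf_def prefix_state_def by simp
        also have "\<dots> = 0"
        proof (rule sum.neutral, rule ballI)
          fix t assume "t \<in> {1..r}"
          then have "t + (r + k - t) > r + 1" using 3 by auto
          then show "int (c t (r + k - t)) = 0" using sz by simp
        qed
        finally show ?thesis using 3 unfolding single_state_def by simp
      qed
    qed
  qed
  have states: "jstate s" if "s \<in> set (ssc c)" for s
  proof -
    obtain i where i: "i < length (ssc c)" "s = ssc c ! i" using \<open>s \<in> set (ssc c)\<close> by (metis in_set_conv_nth)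
    then have ir: "i \<le> r" using ssc_len by simp
    have s: "s = stf aa c i" using i ssc_nth[OF ir] by simp
    have "{k. s k \<noteq> 0} \<subseteq> {..r+1}"
    proof
      fix k assume k: "k \<in> {k. s k \<noteq> 0}"
      show "k \<in> {..r+1}"
      proof (rule ccontr)
        assume "k \<notin> {..r+1}"
        then have kb: "k > r + 1" by simp
        have "aa (i + k) = 0" using kb unfolding prefix_state_def by simp
        moreover have "(\<Sum>t\<in>{1..i}. int (c t (i + k - t))) = 0"
        proof (rule sum.neutral, rule ballI)
          fix t assume "t \<in> {1..i}"
          then have "t + (i + k - t) > r + 1" using kb by auto
          then show "int (c t (i + k - t)) = 0" using sz by simp
        qed
        ultimately have "s k = 0" using s kb unfolding stf_def by simp
        then show False using k by simp
      qed
    qed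
    then have "finite {k. s k \<noteq> 0}" by (rule finite_subset) simp
    moreover have "s 0 = 0" using s unfolding stf_def by simp
    ultimately show ?thesis unfolding jstate_def by simp
  qed
  have steps: "jstep (ssc c ! i) (ssc c ! (i + 1))" if ir: "i < r" for i
  proof -
    define c' where "c' = (\<lambda>j. if j = 0 then 0 else c (Suc i) j)"
    have supp: "{k. c' k \<noteq> 0} \<subseteq> {1..r}"
    proof
      fix j assume "j \<in> {k. c' k \<noteq> 0}"
      then have "j \<noteq> 0" "c (Suc i) j \<noteq> 0" unfolding c'_def by (auto split: if_splits)
      then have "Suc i + j \<le> r + 1" using sz by (meson not_le)
      then show "j \<in> {1..r}" using \<open>j \<noteq> 0\<close> by simp
    qed
    have "sum c' {k. c' k \<noteq> 0} = sum c' {1..r}"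
      by (rule sum.mono_neutral_left) (use supp in auto)
    also have "\<dots> = (\<Sum>j\<in>{1..r}. c (Suc i) j)" unfolding c'_def by (intro sum.cong refl) simp
    also have "\<dots> = outc r c (Suc i)" using ir by (simp add: outc_eq)
    finally have s1: "sum c' {k. c' k \<noteq> 0} = outc r c (Suc i)" .
    have "(ssc c ! i) 1 = aa (i + 1) + (\<Sum>t\<in>{1..i}. int (c t (i + 1 - t)))"
      using ssc_nth[of i c] ir unfolding stf_def by simp
    also have "aa (i + 1) = \<mu> (Suc i)" unfolding prefix_state_def using ir by simp
    also have "(\<Sum>t\<in>{1..i}. int (c t (i + 1 - t))) = int (innc r c (Suc i))"
    proof -
      have "innc r c (Suc i) = (\<Sum>t\<in>{1..<Suc i}. c t (Suc i - t))" using ir by (simp add: innc_eq)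
      also have "{1..<Suc i} = {1..i}" by auto
      finally show ?thesis by (simp add: of_nat_sum)
    qed
    finally have s2: "(ssc c ! i) 1 = int (outc r c (Suc i))" using bal[of "Suc i"] by simp
    have tr: "(ssc c ! (i + 1)) k = (ssc c ! i) (k + 1) + int (c' k)" if "k \<ge> 1" for k
      using ssc_nth[of i c] ssc_nth[of "Suc i" c] ir stf_Suc[OF that, of aa c i] that unfolding c'_def by simp
    have "finite {k. c' k \<noteq> 0}" using supp by (rule finite_subset) simp
    then show ?thesis unfolding jstep_def using s1 s2 tr
      by (intro exI[of _ c']) (simp add: c'_def)
  qed
  show ?thesis unfolding JS_def using first last states steps ssc_len by auto
qed

lemma fmap_ssc: assumes c: "c \<in> Dset r \<mu>" shows "fmap r (ssc c) = c"
proof (intro ext)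
  fix i j
  have sc: "supp_ok r c" using c unfolding Dset_def supp_ok_def by blast
  show "fmap r (ssc c) i j = c i j"
  proof (cases "1 \<le> i \<and> i \<le> r \<and> 1 \<le> j")
    case True
    then obtain i' where i': "i = Suc i'" by (cases i) auto
    have "throws (ssc c) i j = nat (stf aa c (Suc i') j - stf aa c i' (j + 1))"
      unfolding throws_def using ssc_nth[of i c] ssc_nth[of i' c] True i' by simp
    also have "\<dots> = c i j" using stf_Suc[of j aa c i'] True i' by simp
    finally show ?thesis using True fmap_throws by simp
  next
    case False
    then have "c i j = 0" using sc unfolding supp_ok_def by force
    then show ?thesis using False unfolding fmap_def by auto
  qed
qed

lemma bij_F: "bij_betw (fmap r) (JS aa bb r) (Dset r \<mu>)"
proof (rule bij_betwI')
  fix x y assume x: "x \<in> JS aa bb r" and y: "y \<in> JS aa bb r"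
  show "(fmap r x = fmap r y) = (x = y)"
  proof
    assume eq: "fmap r x = fmap r y"
    have lx: "length x = r + 1" and ly: "length y = r + 1" using x y unfolding JS_def by auto
    show "x = y"
    proof (rule nth_equalityI)
      show "length x = length y" using lx ly by simp
      fix i assume "i < length x"
      then have "i \<le> r" using lx by simp
      then show "x ! i = y ! i" using JS_state'[OF x] JS_state'[OF y] eq by simp
    qed
  qed simp
next
  fix x assume "x \<in> JS aa bb r" then show "fmap r x \<in> Dset r \<mu>" by (rule fmap_D)
next
  fix c assume c: "c \<in> Dset r \<mu>"
  show "\<exists>x\<in>JS aa bb r. c = fmap r x" using ssc_JS[OF c] fmap_ssc[OF c] by metis
qed

lemma js_eq: assumes ss: "ss \<in> JS aa bb r" shows "gmap r (fmap r ss) = js_to_roots r ss"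
  unfolding gmap_def js_to_roots_def
proof (rule sum.cong[OF refl])
  fix i assume i: "i \<in> {1..r}"
  define S where "S = {j. 1 \<le> j \<and> throws ss i j \<noteq> 0}"
  have Ssub: "S \<subseteq> {1..r}"
  proof
    fix j assume "j \<in> S"
    then have "1 \<le> j" "throws ss i j \<noteq> 0" unfolding S_def by auto
    then have "\<not> (i + j \<ge> r + 2)" using vanish[OF ss, of i j] i by auto
    then show "j \<in> {1..r}" using \<open>1 \<le> j\<close> i by simp
  qed
  have "(\<Sum>j\<in>{1..r}. replicate_mset (fmap r ss i j) (root i (i + j))) = (\<Sum>j\<in>{1..r}. replicate_mset (throws ss i j) (root i (i + j)))"
    using i by (intro sum.cong refl) (simp add: fmap_throws)
  also have "\<dots> = (\<Sum>j\<in>S. replicate_mset (throws ss i j) (root i (i + j)))"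
    by (rule sum.mono_neutral_right) (use Ssub in \<open>auto simp: S_def\<close>)
  finally show "(\<Sum>j\<in>{1..r}. replicate_mset (fmap r ss i j) (root i (i + j))) = (\<Sum>j\<in>{j. 1 \<le> j \<and> throws ss i j \<noteq> 0}. replicate_mset (throws ss i j) (root i (i + j)))"
    unfolding S_def .
qed

lemma final_bij: "bij_betw (js_to_roots r) (JS aa bb r) (P_A r \<mu>)"
proof -
  have "bij_betw (gmap r \<circ> fmap r) (JS aa bb r) (P_A r \<mu>)" using bij_betw_trans[OF bij_F bij_G] .
  moreover have "bij_betw (gmap r \<circ> fmap r) (JS aa bb r) (P_A r \<mu>) = bij_betw (js_to_roots r) (JS aa bb r) (P_A r \<mu>)"
    by (rule bij_betw_cong) (simp add: js_eq)
  ultimately show ?thesis by simp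
qed

end

theorem mainTheorem4:
  fixes r :: nat and \<mu> :: "nat \<Rightarrow> int"
  assumes "r \<ge> 1"
    and "\<forall>k. (k = 0 \<or> k > r + 1) \<longrightarrow> \<mu> k = 0"
    and "(\<Sum>k=1..r+1. \<mu> k) = 0"
  shows "bij_betw (js_to_roots r)
           (JS (prefix_state r \<mu>) (single_state (\<Sum>k=1..r. \<mu> k)) r) (P_A r \<mu>)
         \<and> K_A r \<mu> = js (prefix_state r \<mu>) (single_state (\<Sum>k=1..r. \<mu> k)) r"
proof -
  have b: "bij_betw (js_to_roots r) (JS (prefix_state r \<mu>) (single_state (\<Sum>k=1..r. \<mu> k)) r) (P_A r \<mu>)"
    by (rule final_bij[OF assms])
  then have "card (JS (prefix_state r \<mu>) (single_state (\<Sum>k=1..r. \<mu> k)) r) = card (P_A r \<mu>)"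
    by (rule bij_betw_same_card)
  then show ?thesis using b unfolding K_A_def js_def by simp
qed

end
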